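(* Let $\mathbb{P}$ be a probability measure on a space $\mathcal{Z}$, $L\colon\mathcal{Z}\to\mathbb{R}$, $\gamma>0$, and $\varphi\in\Phi$. Consider the problem $$\min_{\rho\colon\mathcal{Z}\to\mathbb{R}_{\ge0}}\ \mathbb{E}_{\mathbb{P}}[\rho(\mathsf{Z})L(\mathsf{Z})]+\gamma\,D_\varphi(\rho\cdot\mathbb{P}\,\|\,\mathbb{P})\quad\text{s.t.}\quad\mathbb{E}_{\mathbb{P}}[\rho(\mathsf{Z})]=1.$$ Suppose there exists $b\in\mathbb{R}$ such that: $\mathbb{E}_{\mathbb{P}}[(\gamma\varphi_\uparrow)^*(b-L(\mathsf{Z}))]<+\infty$; the right derivative $(\varphi^* )'_+$ exists $\mathbb{P}$-almost surely at $\frac{b-L(\mathsf{Z})}{\gamma}$; $$\mathbb{E}_{\mathbb{P}}\Big[\Big|(\gamma\varphi_\uparrow)^*(b-L(\mathsf{Z}))-\max\Big\{0,(\varphi^* )'_+\Big(\tfrac{b-L(\mathsf{Z})}{\gamma}\Big)\Big\}\cdot(b-L(\mathsf{Z}))\Big|\Big]<+\infty;$$ and $\mathbb{E}_{\mathbb{P}}\big[\max\{0,(\varphi^* )'_+(\tfrac{b-L(\mathsf{Z})}{\gamma})\}\big]=1$. Then an optimal ratio of the problem is $$\rho^\star(z)=\max\Big\{0,(\varphi^* )'_+\Big(\frac{b-L(z)}{\gamma}\Big)\Big\}.$$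
   Context: $\Phi$ is the set of proper convex lower semi-continuous $\varphi\colon\mathbb{R}\to(-\infty,+\infty]$ with $\varphi(1)=0$ and $\varphi(\mathbb{R}_{\ge0})\subset\mathbb{R}$. The $\varphi$-divergence is $D_\varphi(\mathbb{P}'\|\mathbb{Q})=\int\varphi(\tfrac{\mathrm{d}\mathbb{P}'}{\mathrm{d}\mathbb{Q}})\,\mathrm{d}\mathbb{Q}$. $\varphi_\uparrow(x)=\varphi(x)$ for $x\ge0$ and $+\infty$ for $x<0$. The convex conjugate is $g^*(p)=\sup_{x\in\mathbb{R}}\{xp-g(x)\}$, and $g'_+(x)=\lim_{h\downarrow0}(g(x+h)-g(x))/h$ is the right derivative. *)

theory Defs
  imports "HOL-Probability.Probability"
begin

(* Functions R -> (-inf,+inf] are modelled as real => ereal. *)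

definition ereal_convex :: "(real \<Rightarrow> ereal) \<Rightarrow> bool" where
  "ereal_convex f \<longleftrightarrow>
     (\<forall>x y t. 0 \<le> t \<and> t \<le> 1 \<longrightarrow>
        f (t * x + (1 - t) * y) \<le> ereal t * f x + ereal (1 - t) * f y)"

definition ereal_lsc :: "(real \<Rightarrow> ereal) \<Rightarrow> bool" where
  "ereal_lsc f \<longleftrightarrow> (\<forall>x. f x \<le> Liminf (at x) f)"

definition ereal_proper :: "(real \<Rightarrow> ereal) \<Rightarrow> bool" where
  "ereal_proper f \<longleftrightarrow> (\<forall>x. f x \<noteq> -\<infinity>) \<and> (\<exists>x. f x \<noteq> \<infinity>)"

definition Phi :: "(real \<Rightarrow> ereal) set" where
  "Phi = {\<phi>. ereal_proper \<phi> \<and> ereal_convex \<phi> \<and> ereal_lsc \<phi> \<and> \<phi> 1 = 0 \<and>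
              (\<forall>x\<ge>0. \<phi> x \<noteq> \<infinity> \<and> \<phi> x \<noteq> -\<infinity>)}"

definition phi_up :: "(real \<Rightarrow> ereal) \<Rightarrow> real \<Rightarrow> ereal" where
  "phi_up \<phi> x = (if 0 \<le> x then \<phi> x else \<infinity>)"

definition cconj :: "(real \<Rightarrow> ereal) \<Rightarrow> real \<Rightarrow> ereal" where
  "cconj g p = (SUP x. ereal (x * p) - g x)"

definition has_right_deriv :: "(real \<Rightarrow> ereal) \<Rightarrow> real \<Rightarrow> real \<Rightarrow> bool" where
  "has_right_deriv g x d \<longleftrightarrow>
     \<bar>g x\<bar> \<noteq> \<infinity> \<and> ((\<lambda>h. (g (x + h) - g x) / ereal h) \<longlongrightarrow> ereal d) (at_right 0)"

definition right_deriv_exists :: "(real \<Rightarrow> ereal) \<Rightarrow> real \<Rightarrow> bool" where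
  "right_deriv_exists g x \<longleftrightarrow> (\<exists>d. has_right_deriv g x d)"

definition right_deriv :: "(real \<Rightarrow> ereal) \<Rightarrow> real \<Rightarrow> real" where
  "right_deriv g x = (THE d. has_right_deriv g x d)"

text \<open>Extended-valued expectation E[f] = E[f^+] - E[f^-] (with the ereal
  convention infinity - infinity = infinity).\<close>
definition qint :: "'a measure \<Rightarrow> ('a \<Rightarrow> ereal) \<Rightarrow> ereal" where
  "qint M f = enn2ereal (\<integral>\<^sup>+ z. e2ennreal (f z) \<partial>M) - enn2ereal (\<integral>\<^sup>+ z. e2ennreal (- f z) \<partial>M)"

definition phi_div :: "(real \<Rightarrow> ereal) \<Rightarrow> 'a measure \<Rightarrow> 'a measure \<Rightarrow> ereal" where
  "phi_div \<phi> P' Q = qint Q (\<lambda>z. \<phi> (enn2real (RN_deriv Q P' z)))"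

definition feasible_ratio :: "'a measure \<Rightarrow> ('a \<Rightarrow> real) \<Rightarrow> bool" where
  "feasible_ratio P \<rho> \<longleftrightarrow> \<rho> \<in> borel_measurable P \<and> (\<forall>z\<in>space P. 0 \<le> \<rho> z) \<and>
      (\<integral>\<^sup>+ z. ennreal (\<rho> z) \<partial>P) = 1"

definition objective :: "'a measure \<Rightarrow> ('a \<Rightarrow> real) \<Rightarrow> real \<Rightarrow> (real \<Rightarrow> ereal) \<Rightarrow> ('a \<Rightarrow> real) \<Rightarrow> ereal" where
  "objective P L \<gamma> \<phi> \<rho> =
     qint P (\<lambda>z. ereal (\<rho> z * L z)) + ereal \<gamma> * phi_div \<phi> (density P (\<lambda>z. ennreal (\<rho> z))) P"

definition optimal_ratio :: "'a measure \<Rightarrow> ('a \<Rightarrow> real) \<Rightarrow> real \<Rightarrow> (real \<Rightarrow> ereal) \<Rightarrow> ('a \<Rightarrow> real) \<Rightarrow> bool" where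
  "optimal_ratio P L \<gamma> \<phi> \<rho> \<longleftrightarrow> feasible_ratio P \<rho> \<and>
     (\<forall>\<rho>'. feasible_ratio P \<rho>' \<longrightarrow> objective P L \<gamma> \<phi> \<rho> \<le> objective P L \<gamma> \<phi> \<rho>')"

end

theory Submission
  imports Defs
begin



lemma cconj_ge: "ereal (x * q) - f x \<le> cconj f q"
  unfolding cconj_def by (rule SUP_upper) simp

lemma cconj_ge1: "f 1 = 0 \<Longrightarrow> ereal q \<le> cconj f q"
  using cconj_ge[of 1 q f] by simp

lemma cconj_le_real:
  assumes "\<And>x. f x \<noteq> -\<infinity>" "\<And>x c. f x = ereal c \<Longrightarrow> x * q - c \<le> B"
  shows "cconj f q \<le> ereal B"
  unfolding cconj_def
proof (rule SUP_least)
  fix x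
  show "ereal (x * q) - f x \<le> ereal B"
    using assms(1)[of x] assms(2)[of x]
    by (cases "f x") auto
qed

lemma Q_mono:
  assumes nm: "\<And>x. f x \<noteq> -\<infinity>" and f1: "f 1 = 0"
    and gp: "cconj f p = ereal gp" and h1: "0 < h1" and h12: "h1 \<le> h2"
  shows "(cconj f (p + h1) - cconj f p) / ereal h1 \<le> (cconj f (p + h2) - cconj f p) / ereal h2"
proof (cases "cconj f (p + h2) = \<infinity>")
  case True
  then show ?thesis using h1 h12 gp by simp
next
  case False
  have "ereal (p + h2) \<le> cconj f (p + h2)" by (rule cconj_ge1[of f, OF f1])
  with False obtain G2 where G2: "cconj f (p + h2) = ereal G2"
    by (cases "cconj f (p + h2)") auto
  define t where "t = h1 / h2"
  have t0: "0 < t" "t \<le> 1" using h1 h12 by (auto simp: t_def)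
  have ph1: "p + h1 = t * (p + h2) + (1 - t) * p" using h1 h12 by (simp add: t_def field_simps)
  have le: "cconj f (p + h1) \<le> ereal (t * G2 + (1 - t) * gp)"
  proof (rule cconj_le_real[OF nm])
    fix x c assume fx: "f x = ereal c"
    have a: "x * (p + h2) - c \<le> G2" using cconj_ge[of x "p+h2" f] fx G2 by simp
    have b: "x * p - c \<le> gp" using cconj_ge[of x p f] fx gp by simp
    have "x * (p + h1) - c = t * (x * (p + h2) - c) + (1 - t) * (x * p - c)"
      unfolding ph1 by (simp add: algebra_simps)
    also have "\<dots> \<le> t * G2 + (1 - t) * gp"
      using a b t0 by (intro add_mono mult_left_mono) auto
    finally show "x * (p + h1) - c \<le> t * G2 + (1 - t) * gp" .
  qed
  have "ereal (p + h1) \<le> cconj f (p + h1)" by (rule cconj_ge1[of f, OF f1])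
  with le obtain G1 where G1: "cconj f (p + h1) = ereal G1"
    by (cases "cconj f (p + h1)") auto
  have "G1 - gp \<le> t * (G2 - gp)" using le G1 by (simp add: algebra_simps)
  then have "(G1 - gp) / h1 \<le> (G2 - gp) / h2"
    using h1 h12 by (simp add: t_def field_simps)
  then show ?thesis using G1 G2 gp h1 h12 by simp
qed



definition QQ :: "(real \<Rightarrow> ereal) \<Rightarrow> real \<Rightarrow> real \<Rightarrow> ereal" where
  "QQ f p h = (cconj f (p + h) - cconj f p) / ereal h"

lemma right_lim:
  assumes nm: "\<And>x. f x \<noteq> -\<infinity>" and f1: "f 1 = 0" and gp: "cconj f p = ereal gp"
  shows "(QQ f p \<longlongrightarrow> (INF n::nat. QQ f p (1 / Suc n))) (at_right 0)"
proof -
  have mono: "\<And>a b. 0 < a \<Longrightarrow> a \<le> b \<Longrightarrow> QQ f p a \<le> QQ f p b"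
    unfolding QQ_def by (rule Q_mono[of f, OF nm f1 gp])
  have "(QQ f p \<longlongrightarrow> Inf (QQ f p ` ({0<..} \<inter> UNIV))) (at 0 within ({0<..} \<inter> UNIV))"
    by (rule Lim_right_bound[where K="-\<infinity>"]) (auto intro: mono)
  then have lim: "(QQ f p \<longlongrightarrow> Inf (QQ f p ` {0<..})) (at_right 0)" by simp
  have "Inf (QQ f p ` {0<..}) = (INF n::nat. QQ f p (1 / Suc n))"
  proof (rule antisym)
    show "Inf (QQ f p ` {0<..}) \<le> (INF n::nat. QQ f p (1 / Suc n))"
      by (rule INF_greatest, rule INF_lower) auto
    show "(INF n::nat. QQ f p (1 / Suc n)) \<le> Inf (QQ f p ` {0<..})"
    proof (rule INF_greatest)
      fix h :: real assume "h \<in> {0<..}"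
      then have h: "0 < h" by simp
      obtain n :: nat where n: "1 / h < n" using reals_Archimedean2 by blast
      have "1 / real (Suc n) \<le> h"
        using n h by (simp add: field_simps)
      then have "QQ f p (1 / Suc n) \<le> QQ f p h" by (intro mono) auto
      then show "(INF n::nat. QQ f p (1 / Suc n)) \<le> QQ f p h"
        by (meson INF_lower2 UNIV_I)
    qed
  qed
  with lim show ?thesis by simp
qed

lemma has_rd_iff:
  assumes nm: "\<And>x. f x \<noteq> -\<infinity>" and f1: "f 1 = 0"
  shows "has_right_deriv (cconj f) p d \<longleftrightarrow>
     \<bar>cconj f p\<bar> \<noteq> \<infinity> \<and> (INF n::nat. QQ f p (1 / Suc n)) = ereal d"
proof
  assume H: "has_right_deriv (cconj f) p d"
  then have fin: "\<bar>cconj f p\<bar> \<noteq> \<infinity>" and t: "(QQ f p \<longlongrightarrow> ereal d) (at_right 0)"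
    unfolding has_right_deriv_def QQ_def by auto
  from fin obtain gp where gp: "cconj f p = ereal gp" by (cases "cconj f p") auto
  have "(INF n::nat. QQ f p (1 / Suc n)) = ereal d"
    using tendsto_unique[OF _ right_lim[of f, OF nm f1 gp] t] by simp
  with fin show "\<bar>cconj f p\<bar> \<noteq> \<infinity> \<and> (INF n::nat. QQ f p (1 / Suc n)) = ereal d" by simp
next
  assume H: "\<bar>cconj f p\<bar> \<noteq> \<infinity> \<and> (INF n::nat. QQ f p (1 / Suc n)) = ereal d"
  then obtain gp where gp: "cconj f p = ereal gp" by (cases "cconj f p") auto
  show "has_right_deriv (cconj f) p d"
    using H right_lim[of f, OF nm f1 gp] unfolding has_right_deriv_def QQ_def by simp
qed

lemma right_deriv_repr:
  assumes nm: "\<And>x. f x \<noteq> -\<infinity>" and f1: "f 1 = 0"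
  shows "right_deriv (cconj f) p =
    (if \<bar>cconj f p\<bar> \<noteq> \<infinity> \<and> \<bar>INF n::nat. QQ f p (1 / Suc n)\<bar> \<noteq> \<infinity>
     then real_of_ereal (INF n::nat. QQ f p (1 / Suc n)) else (THE d. False))"
proof (cases "\<bar>cconj f p\<bar> \<noteq> \<infinity> \<and> \<bar>INF n::nat. QQ f p (1 / Suc n)\<bar> \<noteq> \<infinity>")
  case True
  let ?I = "INF n::nat. QQ f p (1 / Suc n)"
  have e: "?I = ereal (real_of_ereal ?I)" using True by (cases ?I) auto
  have "right_deriv (cconj f) p = real_of_ereal ?I"
    unfolding right_deriv_def
  proof (rule the_equality)
    show "has_right_deriv (cconj f) p (real_of_ereal ?I)"
      using True e by (subst has_rd_iff[of f, OF nm f1]) simp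
    fix d assume "has_right_deriv (cconj f) p d"
    then show "d = real_of_ereal ?I" using has_rd_iff[of f, OF nm f1] by (metis real_of_ereal.simps(1))
  qed
  then show ?thesis using True by simp
next
  case False
  have "\<And>d. \<not> has_right_deriv (cconj f) p d"
    using False by (subst has_rd_iff[of f, OF nm f1]) auto
  then have "has_right_deriv (cconj f) p = (\<lambda>d. False)" by auto
  then show ?thesis using False unfolding right_deriv_def by auto
qed

lemma cconj_borel:
  assumes nm: "\<And>x. f x \<noteq> -\<infinity>"
  shows "cconj f \<in> borel_measurable borel"
proof (rule borel_measurableI_greater)
  fix a :: ereal
  have "{q. a < cconj f q} = (\<Union>x. {q. a < ereal (x * q) - f x})"
    unfolding cconj_def by (auto simp: less_SUP_iff)
  moreover have "open {q. a < ereal (x * q) - f x}" for x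
  proof (cases "f x")
    case (real c)
    have "{q. a < ereal (x * q) - f x} = {q. a < ereal (x * q - c)}" using real by simp
    moreover have "open {q. a < ereal (x * q - c)}"
      by (rule open_Collect_less) (intro continuous_intros)+
    ultimately show ?thesis by simp
  qed (use nm in auto)
  ultimately have "open {q. a < cconj f q}" by auto
  then show "{q \<in> space borel. a < cconj f q} \<in> sets borel" by simp
qed

lemma right_deriv_borel:
  assumes nm: "\<And>x. f x \<noteq> -\<infinity>" and f1: "f 1 = 0"
  shows "right_deriv (cconj f) \<in> borel_measurable borel"
proof -
  have cb[measurable]: "cconj f \<in> borel_measurable borel" by (rule cconj_borel[OF nm])
  have q[measurable]: "(\<lambda>p. QQ f p (1 / Suc n)) \<in> borel_measurable borel" for n
    unfolding QQ_def by measurable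
  show ?thesis
    by (subst right_deriv_repr[of f, OF nm f1, abs_def]) measurable
qed



lemma QQ_bounds:
  assumes f1: "f 1 = 0" and gp: "cconj f p = ereal gp" and h: "0 < h"
    and lo: "ereal a < QQ f p h" and hi: "QQ f p h < ereal b"
  shows "\<exists>G. cconj f (p + h) = ereal G \<and> a < (G - gp) / h \<and> (G - gp) / h < b"
proof (cases "cconj f (p + h)")
  case (real G)
  then show ?thesis using lo hi gp h unfolding QQ_def by auto
next
  case PInf
  then show ?thesis using hi gp h unfolding QQ_def by auto
next
  case MInf
  then show ?thesis using cconj_ge1[of f "p + h", OF f1] by simp
qed

lemma key:
  assumes nm: "\<And>x. f x \<noteq> -\<infinity>" and f1: "f 1 = 0" and lsc: "ereal_lsc f"
    and H: "has_right_deriv (cconj f) p d"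
  shows "\<exists>c. f d = ereal c \<and> cconj f p = ereal (d * p - c)"
proof -
  from H have fin: "\<bar>cconj f p\<bar> \<noteq> \<infinity>" and t: "(QQ f p \<longlongrightarrow> ereal d) (at_right 0)"
    unfolding has_right_deriv_def QQ_def by auto
  from fin obtain gp where gp: "cconj f p = ereal gp" by (cases "cconj f p") auto
  have ge: "ereal (d * p) - f d \<le> ereal gp" using cconj_ge[of d p f] gp by simp
  have le: "f d \<le> ereal (d * p - gp)"
  proof (rule ccontr)
    assume "\<not> f d \<le> ereal (d * p - gp)"
    then have "ereal (d * p - gp) < f d" by simp
    then obtain c where c1: "ereal (d * p - gp) < ereal c" and c2: "ereal c < f d"
      using ereal_dense2 by blast
    define \<kappa> where "\<kappa> = (c - (d * p - gp)) / 2"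
    have k0: "\<kappa> > 0" using c1 by (simp add: \<kappa>_def)
    have "f d \<le> Liminf (at d) f" using lsc unfolding ereal_lsc_def by blast
    with c2 have "ereal c < Liminf (at d) f" by (rule order_less_le_trans)
    then have "eventually (\<lambda>x. ereal c < f x) (at d)"
      using le_Liminf_iff by blast
    then obtain \<delta> where d0: "\<delta> > 0" and dd: "\<And>x. x \<noteq> d \<Longrightarrow> dist x d < \<delta> \<Longrightarrow> ereal c < f x"
      unfolding eventually_at by auto
    have near: "ereal c < f x" if "\<bar>x - d\<bar> < \<delta>" for x
      using dd[of x] c2 that by (cases "x = d") (auto simp: dist_real_def)
    define \<delta>' where "\<delta>' = min \<delta> (\<kappa> / (\<bar>p\<bar> + 1))"
    have d'0: "\<delta>' > 0" using d0 k0 by (simp add: \<delta>'_def)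
    have nearG: "cx - x * p + gp > \<kappa>" if fx: "f x = ereal cx" and xd: "\<bar>x - d\<bar> < \<delta>'" for x cx
    proof -
      have "c < cx" using near[of x] xd fx by (simp add: \<delta>'_def)
      have "\<bar>x - d\<bar> < \<kappa> / (\<bar>p\<bar> + 1)" using xd by (simp add: \<delta>'_def)
      then have "\<bar>x - d\<bar> * (\<bar>p\<bar> + 1) < \<kappa>"
        by (simp add: pos_less_divide_eq add_pos_nonneg)
      moreover have "\<bar>x - d\<bar> * \<bar>p\<bar> \<le> \<bar>x - d\<bar> * (\<bar>p\<bar> + 1)" by (simp add: mult_left_mono)
      moreover have "(d - x) * p \<ge> - (\<bar>x - d\<bar> * \<bar>p\<bar>)"
        using abs_ge_minus_self[of "(d-x)*p"] by (simp add: abs_mult abs_minus_commute)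
      ultimately have "(d - x) * p > - \<kappa>" by linarith
      then have "d * p - x * p > - \<kappa>" by (simp add: algebra_simps)
      then show ?thesis using \<open>c < cx\<close> unfolding \<kappa>_def by argo
    qed
    define \<tau> where "\<tau> = \<delta>' / 8"
    have t0: "\<tau> > 0" using d'0 by (simp add: \<tau>_def)
    have ev: "eventually (\<lambda>h. ereal (d - \<tau>) < QQ f p h \<and> QQ f p h < ereal (d + \<tau>)) (at_right 0)"
      by (intro eventually_conj order_tendstoD[OF t]) (use t0 in auto)
    then obtain h0 where h00: "h0 > 0" and h0: "\<And>h. 0 < h \<Longrightarrow> h < h0 \<Longrightarrow>
        ereal (d - \<tau>) < QQ f p h \<and> QQ f p h < ereal (d + \<tau>)"
      unfolding eventually_at_right_field by auto
    define h1 where "h1 = h0 / 2"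
    define h where "h = min (h1 / 2) (\<kappa> / (6 * \<tau>))"
    have h1p: "0 < h1" "h1 < h0" using h00 by (auto simp: h1_def)
    have hp: "0 < h" "h \<le> h1 / 2" "h \<le> \<kappa> / (6 * \<tau>)" using h1p k0 t0 by (auto simp: h_def)
    obtain G1 where G1: "cconj f (p + h1) = ereal G1" "(G1 - gp) / h1 < d + \<tau>"
      using QQ_bounds[OF f1 gp h1p(1)] h0[OF h1p] by blast
    obtain Gh where Gh: "cconj f (p + h) = ereal Gh" "d - \<tau> < (Gh - gp) / h"
      using QQ_bounds[OF f1 gp hp(1)] h0[of h] hp h1p by force
    have "h * (d - \<tau>) < Gh - gp" using Gh(2) hp(1) by (simp add: pos_less_divide_eq mult.commute)
    moreover have "h * (d - 2 * \<tau>) = h * (d - \<tau>) - h * \<tau>" by (simp add: algebra_simps)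
    moreover have "h * \<tau> > 0" using hp(1) t0 by simp
    ultimately have "gp + h * (d - 2 * \<tau>) < Gh" by argo
    then have "ereal (gp + h * (d - 2 * \<tau>)) < cconj f (p + h)"
      using Gh(1) by simp
    then obtain x where x: "ereal (gp + h * (d - 2 * \<tau>)) < ereal (x * (p + h)) - f x"
      unfolding cconj_def by (auto simp: less_SUP_iff)
    then obtain cx where cx: "f x = ereal cx" using nm[of x] by (cases "f x") auto
    have E1: "gp + h * (d - 2 * \<tau>) < x * (p + h) - cx" using x cx by simp
    have E2: "x * (p + h1) - cx < gp + h1 * (d + \<tau>)"
    proof -
      have "x * (p + h1) - cx \<le> G1" using cconj_ge[of x "p + h1" f] cx G1(1) by simp
      moreover have "G1 - gp < h1 * (d + \<tau>)" using G1(2) h1p(1)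
        by (simp add: pos_divide_less_eq mult.commute)
      ultimately show ?thesis by simp
    qed
    have E3: "x * p - cx \<le> gp" using cconj_ge[of x p f] cx gp by simp
    define u where "u = x - d"
    define Gx where "Gx = cx - x * p + gp"
    have F1: "h * (u + 2 * \<tau>) > Gx" using E1 by (simp add: u_def Gx_def algebra_simps)
    have F2: "Gx > h1 * (u - \<tau>)" using E2 by (simp add: u_def Gx_def algebra_simps)
    have F3: "Gx \<ge> 0" using E3 by (simp add: Gx_def)
    have u1: "u > - 2 * \<tau>"
    proof (rule ccontr)
      assume "\<not> u > - 2 * \<tau>"
      then have "u + 2 * \<tau> \<le> 0" by simp
      then have "h * (u + 2 * \<tau>) \<le> 0" using hp(1) by (simp add: mult_nonneg_nonpos)
      then show False using F1 F3 by simp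
    qed
    have u2: "u < 4 * \<tau>"
    proof (rule ccontr)
      assume "\<not> u < 4 * \<tau>"
      then have u4: "u \<ge> 4 * \<tau>" by simp
      then have "h * (u + 2 * \<tau>) \<le> (h1 / 2) * (u + 2 * \<tau>)"
        using hp t0 by (intro mult_right_mono) auto
      also have "\<dots> = h1 * (u / 2 + \<tau>)" by (simp add: algebra_simps)
      also have "\<dots> \<le> h1 * (u - \<tau>)" using u4 h1p by (intro mult_left_mono) auto
      finally show False using F1 F2 by simp
    qed
    have "\<bar>x - d\<bar> < \<delta>'" using u1 u2 t0 by (simp add: u_def \<tau>_def abs_less_iff)
    then have "Gx > \<kappa>" using nearG[OF cx] by (simp add: Gx_def)
    moreover have "h * (u + 2 * \<tau>) \<le> h * (6 * \<tau>)" using u2 hp(1) by (intro mult_left_mono) auto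
    moreover have "h * (6 * \<tau>) \<le> \<kappa>" using hp(3) t0 by (simp add: pos_le_divide_eq)
    ultimately show False using F1 by simp
  qed
  from le obtain c where c: "f d = ereal c" using nm[of d] by (cases "f d") auto
  have "c = d * p - gp" using le ge c by simp
  then show ?thesis using c gp by simp
qed



definition phr :: "(real \<Rightarrow> ereal) \<Rightarrow> real \<Rightarrow> real" where
  "phr f x = real_of_ereal (f x)"

lemma Phi_D:
  assumes "f \<in> Phi"
  shows "\<And>x. f x \<noteq> -\<infinity>" "f 1 = 0" "ereal_lsc f" "ereal_convex f"
    "\<And>x. 0 \<le> x \<Longrightarrow> f x = ereal (phr f x)"
proof -
  show "\<And>x. f x \<noteq> -\<infinity>" "f 1 = 0" "ereal_lsc f" "ereal_convex f"
    using assms unfolding Phi_def ereal_proper_def by auto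
  fix x :: real assume "0 \<le> x"
  then have "f x \<noteq> \<infinity>" "f x \<noteq> -\<infinity>" using assms unfolding Phi_def by auto
  then show "f x = ereal (phr f x)" unfolding phr_def by (cases "f x") auto
qed

lemma conv_real:
  assumes "ereal_convex f" "f x = ereal a" "f y = ereal b" "0 \<le> t" "t \<le> 1"
  shows "f (t * x + (1 - t) * y) \<le> ereal (t * a + (1 - t) * b)"
proof -
  have "f (t * x + (1 - t) * y) \<le> ereal t * f x + ereal (1 - t) * f y"
    using assms(1,4,5) unfolding ereal_convex_def by blast
  then show ?thesis using assms(2,3) by simp
qed

lemma FY:
  assumes P: "f \<in> Phi" and H: "has_right_deriv (cconj f) p d" and x0: "0 \<le> x"
  shows "x * p - phr f x \<le> max 0 d * p - phr f (max 0 d)"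
proof -
  note PD = Phi_D[OF P]
  obtain c where c: "f d = ereal c" and g: "cconj f p = ereal (d * p - c)"
    using key[of f, OF PD(1) PD(2) PD(3) H] by blast
  have gx: "x * p - phr f x \<le> d * p - c"
    using cconj_ge[of x p f] g PD(5)[OF x0] by simp
  show ?thesis
  proof (cases "0 \<le> d")
    case True
    then show ?thesis using gx c PD(5)[OF True] by simp
  next
    case False
    show ?thesis
    proof (cases "x = 0")
      case True then show ?thesis using False by simp
    next
      case x1: False
      with x0 have xp: "x > 0" by simp
      define t where "t = - d / (x - d)"
      have t01: "0 \<le> t" "t \<le> 1" using False xp by (auto simp: t_def field_simps)
      have tx: "t * x + (1 - t) * d = 0" using False xp by (simp add: t_def field_simps)
      have "f (t * x + (1 - t) * d) \<le> ereal (t * phr f x + (1 - t) * c)"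
        by (rule conv_real[OF PD(4) PD(5)[OF x0] c t01])
      then have conv: "phr f 0 \<le> t * phr f x + (1 - t) * c" using tx PD(5)[of 0] by simp
      have td: "(1 - t) * d = - (t * x)" using tx by (simp add: algebra_simps)
      have "(1 - t) * (d * p - x * p + phr f x) = ((1 - t) * d) * p - (1 - t) * x * p + (1 - t) * phr f x"
        by (simp add: algebra_simps)
      also have "\<dots> = - (t * x) * p - (1 - t) * x * p + (1 - t) * phr f x" by (simp only: td)
      finally have e: "(1 - t) * (d * p - x * p + phr f x) = - (t * x) * p - (1 - t) * x * p + (1 - t) * phr f x" .
      have e2: "t * phr f x + (- (t * x) * p - (1 - t) * x * p + (1 - t) * phr f x) = phr f x - x * p"
        by (simp add: algebra_simps)
      have "c \<le> d * p - x * p + phr f x" using gx by simp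
      then have m: "(1 - t) * c \<le> (1 - t) * (d * p - x * p + phr f x)"
        using t01 by (intro mult_left_mono) auto
      have "phr f 0 \<le> phr f x - x * p" using conv m e e2 by linarith
      then show ?thesis using False by simp
    qed
  qed
qed




lemma FYg:
  assumes P: "f \<in> Phi" and g0: "\<gamma> > 0" and H: "has_right_deriv (cconj f) (y / \<gamma>) d"
  shows "cconj (\<lambda>x. ereal \<gamma> * phi_up f x) y = ereal (max 0 d * y - \<gamma> * phr f (max 0 d))"
proof (rule antisym)
  note PD = Phi_D[OF P]
  let ?r = "max 0 d"
  have r0: "0 \<le> ?r" by simp
  show "cconj (\<lambda>x. ereal \<gamma> * phi_up f x) y \<le> ereal (?r * y - \<gamma> * phr f ?r)"
  proof (rule cconj_le_real)
    fix x show "ereal \<gamma> * phi_up f x \<noteq> - \<infinity>"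
      using PD(1)[of x] g0 unfolding phi_up_def by (cases "f x") auto
  next
    fix x c assume fx: "ereal \<gamma> * phi_up f x = ereal c"
    then have x0: "0 \<le> x" using g0 unfolding phi_up_def by (auto split: if_splits)
    then have cx: "c = \<gamma> * phr f x" using fx PD(5)[OF x0] unfolding phi_up_def by simp
    have "x * (y / \<gamma>) - phr f x \<le> ?r * (y / \<gamma>) - phr f ?r" by (rule FY[OF P H x0])
    then have "\<gamma> * (x * (y / \<gamma>) - phr f x) \<le> \<gamma> * (?r * (y / \<gamma>) - phr f ?r)"
      using g0 by (intro mult_left_mono) auto
    then show "x * y - c \<le> ?r * y - \<gamma> * phr f ?r" using g0 cx by (simp add: algebra_simps)
  qed
  show "ereal (?r * y - \<gamma> * phr f ?r) \<le> cconj (\<lambda>x. ereal \<gamma> * phi_up f x) y"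
    using cconj_ge[of ?r y "\<lambda>x. ereal \<gamma> * phi_up f x"] PD(5)[OF r0]
    unfolding phi_up_def by (simp add: mult.commute)
qed



lemma lsc_open:
  assumes "ereal_lsc f"
  shows "open {x. a < f x}"
proof (rule Topological_Spaces.openI)
  fix x assume "x \<in> {x. a < f x}"
  then have ax: "a < f x" by simp
  have "f x \<le> Liminf (at x) f" using assms unfolding ereal_lsc_def by blast
  with ax have "a < Liminf (at x) f" by (rule order_less_le_trans)
  then have "eventually (\<lambda>y. a < f y) (at x)" using le_Liminf_iff[of "Liminf (at x) f" "at x" f] by auto
  then obtain S where S: "open S" "x \<in> S" "\<And>y. y \<in> S \<Longrightarrow> y \<noteq> x \<Longrightarrow> a < f y"
    unfolding eventually_at_topological by auto
  have "S \<subseteq> {x. a < f x}" using S(3) ax by (metis mem_Collect_eq subsetI)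
  then show "\<exists>T. open T \<and> x \<in> T \<and> T \<subseteq> {x. a < f x}" using S(1,2) by blast
qed

lemma lsc_borel:
  assumes "ereal_lsc f"
  shows "f \<in> borel_measurable borel"
proof (rule borel_measurableI_greater)
  fix a :: ereal
  have "{x. a < f x} \<in> sets borel" by (rule borel_open[OF lsc_open[OF assms]])
  then show "{x \<in> space borel. a < f x} \<in> sets borel" by simp
qed



lemma phi_lower:
  assumes P: "f \<in> Phi" and x0: "0 \<le> x"
  shows "phr f x \<ge> - ((\<bar>phr f 0\<bar> + \<bar>phr f 2\<bar>) * (x + 1))"
proof -
  note PD = Phi_D[OF P]
  have f1: "phr f 1 = 0" using PD(2) by (simp add: phr_def)
  show ?thesis
  proof (cases "1 \<le> x")
    case True
    define t where "t = 1 / x"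
    have t01: "0 \<le> t" "t \<le> 1" using True by (auto simp: t_def)
    have "t * x + (1 - t) * 0 = 1" using True by (simp add: t_def)
    then have "ereal (phr f 1) \<le> ereal (t * phr f x + (1 - t) * phr f 0)"
      using conv_real[OF PD(4) PD(5)[OF x0] PD(5)[of 0] t01] PD(5)[of 1] by simp
    then have "0 \<le> t * phr f x + (1 - t) * phr f 0" using f1 by simp
    then have "0 \<le> x * (t * phr f x + (1 - t) * phr f 0)" using x0 by simp
    also have "\<dots> = phr f x + (x - 1) * phr f 0" using True by (simp add: t_def field_simps)
    finally have a: "- ((x - 1) * phr f 0) \<le> phr f x" by simp
    have "(x - 1) * phr f 0 \<le> (x - 1) * \<bar>phr f 0\<bar>" using True by (intro mult_left_mono) auto
    also have "\<dots> \<le> (x + 1) * \<bar>phr f 0\<bar>" by (intro mult_right_mono) auto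
    finally have "(x - 1) * phr f 0 \<le> (x + 1) * \<bar>phr f 0\<bar>" .
    moreover have "0 \<le> (x + 1) * \<bar>phr f 2\<bar>" using x0 by simp
    ultimately show ?thesis using a by (simp add: algebra_simps)
  next
    case False
    define t where "t = 1 / (2 - x)"
    have t01: "0 \<le> t" "t \<le> 1" using False x0 by (auto simp: t_def)
    have nz: "2 - x > 0" using False by simp
    have tt: "t * (2 - x) = 1" using nz by (simp add: t_def)
    have tt': "(2 - x) * t = 1" using tt by (simp add: mult.commute)
    have "t * x + (1 - t) * 2 = 2 - t * (2 - x)" by (simp add: algebra_simps)
    then have "t * x + (1 - t) * 2 = 1" using tt by simp
    then have eq1: "t * x + (1 - t) * 2 = 1" .
    have "f (t * x + (1 - t) * 2) \<le> ereal (t * phr f x + (1 - t) * phr f 2)"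
      by (rule conv_real[OF PD(4) PD(5)[OF x0] PD(5)[of 2] t01]) simp
    then have "f 1 \<le> ereal (t * phr f x + (1 - t) * phr f 2)" by (simp only: eq1)
    then have "ereal (phr f 1) \<le> ereal (t * phr f x + (1 - t) * phr f 2)"
      using PD(5)[of 1] by simp
    then have "0 \<le> t * phr f x + (1 - t) * phr f 2" using f1 by simp
    then have "0 \<le> (2 - x) * (t * phr f x + (1 - t) * phr f 2)" using False by simp
    also have "\<dots> = ((2 - x) * t) * phr f x + ((2 - x) - (2 - x) * t) * phr f 2"
      by (simp add: algebra_simps)
    also have "\<dots> = phr f x + (1 - x) * phr f 2"
      unfolding tt' by (simp add: algebra_simps)
    finally have a: "- ((1 - x) * phr f 2) \<le> phr f x" by simp
    have "(1 - x) * phr f 2 \<le> (1 - x) * \<bar>phr f 2\<bar>" using False by (intro mult_left_mono) auto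
    also have "\<dots> \<le> (x + 1) * \<bar>phr f 2\<bar>" using x0 by (intro mult_right_mono) auto
    finally have "(1 - x) * phr f 2 \<le> (x + 1) * \<bar>phr f 2\<bar>" .
    moreover have "0 \<le> (x + 1) * \<bar>phr f 0\<bar>" using x0 by simp
    ultimately show ?thesis using a by (simp add: algebra_simps)
  qed
qed



lemma enn2ereal_fin: "x \<noteq> \<infinity> \<Longrightarrow> enn2ereal x = ereal (enn2real x)"
  by (cases x) (auto simp: enn2real_def)

lemma qint_real:
  assumes "integrable M f"
  shows "qint M (\<lambda>z. ereal (f z)) = ereal (integral\<^sup>L M f)"
proof -
  have a: "(\<integral>\<^sup>+ x. ennreal (f x) \<partial>M) \<noteq> \<infinity>" "(\<integral>\<^sup>+ x. ennreal (- f x) \<partial>M) \<noteq> \<infinity>"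
    using integrableD[OF assms] by auto
  have e: "e2ennreal (- ereal (f z)) = ennreal (- f z)" for z by simp
  show ?thesis
    unfolding qint_def e e2ennreal_ereal real_lebesgue_integral_def[OF assms]
    using a by (simp add: enn2ereal_fin)
qed

lemma qint_cong:
  assumes "AE z in M. f z = g z"
  shows "qint M f = qint M g"
proof -
  have "(\<integral>\<^sup>+ z. e2ennreal (f z) \<partial>M) = (\<integral>\<^sup>+ z. e2ennreal (g z) \<partial>M)"
    by (rule nn_integral_cong_AE) (use assms in auto)
  moreover have "(\<integral>\<^sup>+ z. e2ennreal (- f z) \<partial>M) = (\<integral>\<^sup>+ z. e2ennreal (- g z) \<partial>M)"
    by (rule nn_integral_cong_AE) (use assms in auto)
  ultimately show ?thesis unfolding qint_def by simp
qed

lemma qint_top: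
  assumes "(\<integral>\<^sup>+ z. e2ennreal (f z) \<partial>M) = \<infinity>"
  shows "qint M f = \<infinity>"
  unfolding qint_def assms by simp

lemma ennreal_add_le: "0 \<le> k \<Longrightarrow> ennreal (a + k) \<le> ennreal a + ennreal k"
proof (cases "0 \<le> a")
  case False
  assume k: "0 \<le> k"
  then have "ennreal (a + k) \<le> ennreal k" using False by (intro ennreal_leI) simp
  also have "\<dots> \<le> ennreal a + ennreal k" by simp
  finally show ?thesis .
qed simp

lemma integrable_from_below:
  fixes f h :: "'a \<Rightarrow> real"
  assumes fm: "f \<in> borel_measurable M" and fin: "(\<integral>\<^sup>+ z. ennreal (f z) \<partial>M) < \<infinity>"
    and hi: "integrable M h" and lb: "AE z in M. - h z \<le> f z"
  shows "integrable M f"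
proof -
  let ?k = "\<lambda>z. \<bar>h z\<bar>"
  have ki: "integrable M ?k" using hi by simp
  have km: "?k \<in> borel_measurable M" using hi by auto
  have kfin: "(\<integral>\<^sup>+ z. ennreal (?k z) \<partial>M) < \<infinity>"
    using integrableD(2)[OF ki] by (simp add: top.not_eq_extremum)
  have "(\<integral>\<^sup>+ z. ennreal (f z + ?k z) \<partial>M) \<le> (\<integral>\<^sup>+ z. ennreal (f z) + ennreal (?k z) \<partial>M)"
    by (intro nn_integral_mono ennreal_add_le) simp
  also have "\<dots> = (\<integral>\<^sup>+ z. ennreal (f z) \<partial>M) + (\<integral>\<^sup>+ z. ennreal (?k z) \<partial>M)"
    using fm km by (intro nn_integral_add) auto
  also have "\<dots> < \<infinity>" using fin kfin by simp
  finally have "(\<integral>\<^sup>+ z. ennreal (f z + ?k z) \<partial>M) < \<infinity>" .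
  moreover have "AE z in M. 0 \<le> f z + ?k z" using lb by eventually_elim auto
  ultimately have "integrable M (\<lambda>z. f z + ?k z)"
    using fm km by (intro integrableI_nonneg) auto
  then have "integrable M (\<lambda>z. (f z + ?k z) - ?k z)" using ki by (rule Bochner_Integration.integrable_diff)
  then show ?thesis by simp
qed

lemma phi_div_feas:
  assumes ps: "prob_space P" and Ph: "\<phi> \<in> Phi" and m: "\<rho> \<in> borel_measurable P"
    and nn: "\<forall>z\<in>space P. 0 \<le> \<rho> z"
  shows "phi_div \<phi> (density P (\<lambda>z. ennreal (\<rho> z))) P =
         qint P (\<lambda>z. ereal (real_of_ereal (\<phi> (\<rho> z))))"
proof -
  interpret prob_space P by fact
  have "AE z in P. ennreal (\<rho> z) = RN_deriv P (density P (\<lambda>z. ennreal (\<rho> z))) z"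
    using m by (intro RN_deriv_unique) auto
  moreover have "AE z in P. 0 \<le> \<rho> z" using nn by (intro AE_I2) auto
  ultimately have "AE z in P. \<phi> (enn2real (RN_deriv P (density P (\<lambda>z. ennreal (\<rho> z))) z)) =
       ereal (real_of_ereal (\<phi> (\<rho> z)))"
  proof (eventually_elim)
    case (elim z)
    have "\<phi> (\<rho> z) \<noteq> \<infinity>" "\<phi> (\<rho> z) \<noteq> -\<infinity>" using Ph elim(2) unfolding Phi_def by auto
    moreover have "enn2real (RN_deriv P (density P (\<lambda>z. ennreal (\<rho> z))) z) = \<rho> z"
      using elim by (simp flip: elim(1))
    ultimately show ?case by (cases "\<phi> (\<rho> z)") auto
  qed
  then show ?thesis unfolding phi_div_def by (rule qint_cong)
qed




lemma right_deriv_eqI: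
  assumes "has_right_deriv g p d"
  shows "right_deriv g p = d"
  unfolding right_deriv_def
proof (rule the_equality)
  show "has_right_deriv g p d" by fact
  fix d' assume "has_right_deriv g p d'"
  then have "((\<lambda>h. (g (p + h) - g p) / ereal h) \<longlongrightarrow> ereal d') (at_right 0)"
    unfolding has_right_deriv_def by auto
  moreover have "((\<lambda>h. (g (p + h) - g p) / ereal h) \<longlongrightarrow> ereal d) (at_right 0)"
    using assms unfolding has_right_deriv_def by auto
  ultimately have "ereal d' = ereal d" by (intro tendsto_unique) auto
  then show "d' = d" by simp
qed

theorem theorem3:
  fixes P :: "'a measure" and L :: "'a \<Rightarrow> real" and \<gamma> :: real
    and \<phi> :: "real \<Rightarrow> ereal" and b :: real
  assumes "prob_space P"
    and "L \<in> borel_measurable P"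
    and "\<gamma> > 0"
    and "\<phi> \<in> Phi"
    and "(\<integral>\<^sup>+ z. e2ennreal (cconj (\<lambda>x. ereal \<gamma> * phi_up \<phi> x) (b - L z)) \<partial>P) < \<infinity>"
    and "AE z in P. right_deriv_exists (cconj \<phi>) ((b - L z) / \<gamma>)"
    and "(\<integral>\<^sup>+ z. e2ennreal \<bar>cconj (\<lambda>x. ereal \<gamma> * phi_up \<phi> x) (b - L z)
            - ereal (max 0 (right_deriv (cconj \<phi>) ((b - L z) / \<gamma>)) * (b - L z))\<bar> \<partial>P) < \<infinity>"
    and "(\<integral>\<^sup>+ z. ennreal (max 0 (right_deriv (cconj \<phi>) ((b - L z) / \<gamma>))) \<partial>P) = 1"
  shows "optimal_ratio P L \<gamma> \<phi> (\<lambda>z. max 0 (right_deriv (cconj \<phi>) ((b - L z) / \<gamma>)))"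
proof -
  interpret prob_space P by fact
  note PD = Phi_D[OF assms(4)]
  have g0: "\<gamma> > 0" by fact
  have Lm[measurable]: "L \<in> borel_measurable P" by fact
  define r where "r = right_deriv (cconj \<phi>)"
  define \<rho> where "\<rho> = (\<lambda>z. max 0 (r ((b - L z) / \<gamma>)))"
  define \<psi> where "\<psi> = (\<lambda>y. cconj (\<lambda>x. ereal \<gamma> * phi_up \<phi> x) y)"
  define G where "G = (\<lambda>z. \<rho> z * (b - L z) - \<gamma> * phr \<phi> (\<rho> z))"
  have rB[measurable]: "r \<in> borel_measurable borel"
    unfolding r_def by (rule right_deriv_borel[of \<phi>, OF PD(1) PD(2)])
  have phB[measurable]: "\<phi> \<in> borel_measurable borel" by (rule lsc_borel[OF PD(3)])
  have phrB[measurable]: "phr \<phi> \<in> borel_measurable borel"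
    unfolding phr_def[abs_def] by measurable
  have \<rho>M[measurable]: "\<rho> \<in> borel_measurable P" unfolding \<rho>_def by measurable
  have GM[measurable]: "G \<in> borel_measurable P" unfolding G_def by measurable
  have \<rho>0: "\<And>z. 0 \<le> \<rho> z" unfolding \<rho>_def by simp
  have feas: "feasible_ratio P \<rho>"
    using \<rho>M \<rho>0 assms(8) unfolding feasible_ratio_def \<rho>_def r_def by simp
  have AEpsi: "AE z in P. \<psi> (b - L z) = ereal (G z)"
    using assms(6)
  proof (eventually_elim)
    case (elim z)
    then obtain d where d: "has_right_deriv (cconj \<phi>) ((b - L z) / \<gamma>) d"
      unfolding right_deriv_exists_def by blast
    have "r ((b - L z) / \<gamma>) = d" unfolding r_def by (rule right_deriv_eqI[OF d])
    then show ?case unfolding \<psi>_def G_def \<rho>_def using FYg[OF assms(4) g0 d] by simp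
  qed
  have psi_ge: "ereal (x * y - \<gamma> * phr \<phi> x) \<le> \<psi> y" if "0 \<le> x" for x y
    using cconj_ge[of x y "\<lambda>x. ereal \<gamma> * phi_up \<phi> x"] PD(5)[OF that] that
    unfolding \<psi>_def phi_up_def by (simp add: mult.commute)
  have AEle: "AE z in P. \<forall>x\<ge>0. x * (b - L z) - \<gamma> * phr \<phi> x \<le> G z"
    using AEpsi
  proof (eventually_elim)
    case (elim z)
    show ?case using psi_ge[of _ "b - L z"] elim by auto
  qed
  have Gpos: "(\<integral>\<^sup>+ z. ennreal (G z) \<partial>P) < \<infinity>"
  proof -
    have "(\<integral>\<^sup>+ z. ennreal (G z) \<partial>P) = (\<integral>\<^sup>+ z. e2ennreal (\<psi> (b - L z)) \<partial>P)"
      by (rule nn_integral_cong_AE) (use AEpsi in auto)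
    then show ?thesis using assms(5) unfolding \<psi>_def by simp
  qed
  have Gint: "integrable P G"
  proof (rule integrable_from_below[OF GM Gpos])
    show "integrable P (\<lambda>z. \<gamma> * phr \<phi> 0)" by simp
    show "AE z in P. - (\<gamma> * phr \<phi> 0) \<le> G z" using AEle by eventually_elim auto
  qed
  have AEeq: "AE z in P. \<gamma> * \<bar>phr \<phi> (\<rho> z)\<bar> =
      real_of_ereal \<bar>\<psi> (b - L z) - ereal (\<rho> z * (b - L z))\<bar>"
    using AEpsi
  proof (eventually_elim)
    case (elim z)
    have "\<bar>G z - \<rho> z * (b - L z)\<bar> = \<gamma> * \<bar>phr \<phi> (\<rho> z)\<bar>"
      using g0 by (simp add: G_def abs_mult)
    then show ?case using elim by simp
  qed
  have phint: "integrable P (\<lambda>z. \<gamma> * phr \<phi> (\<rho> z))"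
  proof (rule integrableI_bounded)
    show "(\<lambda>z. \<gamma> * phr \<phi> (\<rho> z)) \<in> borel_measurable P" by measurable
    have "(\<integral>\<^sup>+ z. ennreal (norm (\<gamma> * phr \<phi> (\<rho> z))) \<partial>P) =
      (\<integral>\<^sup>+ z. e2ennreal \<bar>\<psi> (b - L z) - ereal (\<rho> z * (b - L z))\<bar> \<partial>P)"
    proof (rule nn_integral_cong_AE)
      show "AE z in P. ennreal (norm (\<gamma> * phr \<phi> (\<rho> z))) =
          e2ennreal \<bar>\<psi> (b - L z) - ereal (\<rho> z * (b - L z))\<bar>"
        using AEpsi
      proof (eventually_elim)
        case (elim z)
        have "\<bar>G z - \<rho> z * (b - L z)\<bar> = \<gamma> * \<bar>phr \<phi> (\<rho> z)\<bar>"
          using g0 by (simp add: G_def abs_mult)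
        then show ?case using elim g0 by (simp add: abs_mult)
      qed
    qed
    then show "(\<integral>\<^sup>+ z. ennreal (norm (\<gamma> * phr \<phi> (\<rho> z))) \<partial>P) < \<infinity>"
      using assms(7) unfolding \<psi>_def \<rho>_def r_def by simp
  qed
  have int1: "integrable P \<rho> \<and> integral\<^sup>L P \<rho> = 1" if "feasible_ratio P \<rho>" for \<rho>
  proof -
    have m: "\<rho> \<in> borel_measurable P" and nn: "AE z in P. 0 \<le> \<rho> z"
      and one: "(\<integral>\<^sup>+ z. ennreal (\<rho> z) \<partial>P) = ennreal 1"
      using that unfolding feasible_ratio_def by (auto intro: AE_I2)
    show ?thesis using nn_integral_eq_integrable[OF m nn, of 1] one by simp
  qed
  have \<rho>int: "integrable P \<rho>" "integral\<^sup>L P \<rho> = 1" using int1[OF feas] by auto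
  have \<rho>L_eq: "\<rho> z * L z = \<rho> z * b - G z - \<gamma> * phr \<phi> (\<rho> z)" for z
    by (simp add: G_def algebra_simps)
  have \<rho>Lint: "integrable P (\<lambda>z. \<rho> z * L z)"
    unfolding \<rho>L_eq using \<rho>int(1) Gint phint by (intro Bochner_Integration.integrable_diff) auto
  have obj\<rho>: "objective P L \<gamma> \<phi> \<rho> = ereal (b - integral\<^sup>L P G)"
  proof -
    have "phi_div \<phi> (density P (\<lambda>z. ennreal (\<rho> z))) P = qint P (\<lambda>z. ereal (phr \<phi> (\<rho> z)))"
      using phi_div_feas[OF assms(1,4) \<rho>M] \<rho>0 by (simp add: phr_def)
    also have "\<dots> = ereal (integral\<^sup>L P (\<lambda>z. phr \<phi> (\<rho> z)))"
      by (rule qint_real) (use phint g0 in simp)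
    finally have pd: "phi_div \<phi> (density P (\<lambda>z. ennreal (\<rho> z))) P = ereal (integral\<^sup>L P (\<lambda>z. phr \<phi> (\<rho> z)))" .
    have "objective P L \<gamma> \<phi> \<rho> = ereal (integral\<^sup>L P (\<lambda>z. \<rho> z * L z) + \<gamma> * integral\<^sup>L P (\<lambda>z. phr \<phi> (\<rho> z)))"
      unfolding objective_def pd qint_real[OF \<rho>Lint] by simp
    also have "integral\<^sup>L P (\<lambda>z. \<rho> z * L z) + \<gamma> * integral\<^sup>L P (\<lambda>z. phr \<phi> (\<rho> z)) = b - integral\<^sup>L P G"
    proof -
      have "integral\<^sup>L P (\<lambda>z. \<rho> z * L z) = integral\<^sup>L P (\<lambda>z. \<rho> z * b - G z - \<gamma> * phr \<phi> (\<rho> z))"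
        unfolding \<rho>L_eq ..
      also have "\<dots> = integral\<^sup>L P (\<lambda>z. \<rho> z * b) - integral\<^sup>L P G - integral\<^sup>L P (\<lambda>z. \<gamma> * phr \<phi> (\<rho> z))"
        using \<rho>int Gint phint by (subst Bochner_Integration.integral_diff, auto)+
      also have "\<dots> = b - integral\<^sup>L P G - \<gamma> * integral\<^sup>L P (\<lambda>z. phr \<phi> (\<rho> z))"
        using \<rho>int by simp
      finally show ?thesis by simp
    qed
    finally show ?thesis .
  qed
  have main: "ereal (b - integral\<^sup>L P G) \<le> objective P L \<gamma> \<phi> \<sigma>" if fs: "feasible_ratio P \<sigma>" for \<sigma>
  proof -
    have \<sigma>M[measurable]: "\<sigma> \<in> borel_measurable P" and \<sigma>0: "\<forall>z\<in>space P. 0 \<le> \<sigma> z"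
      using fs unfolding feasible_ratio_def by auto
    have \<sigma>int: "integrable P \<sigma>" "integral\<^sup>L P \<sigma> = 1" using int1[OF fs] by auto
    define u where "u = (\<lambda>z. \<sigma> z * L z)"
    define v where "v = (\<lambda>z. phr \<phi> (\<sigma> z))"
    have uM[measurable]: "u \<in> borel_measurable P" unfolding u_def by measurable
    have vM[measurable]: "v \<in> borel_measurable P" unfolding v_def by measurable
    have pd: "phi_div \<phi> (density P (\<lambda>z. ennreal (\<sigma> z))) P = qint P (\<lambda>z. ereal (v z))"
      using phi_div_feas[OF assms(1,4) \<sigma>M \<sigma>0] by (simp add: phr_def v_def)
    have obj: "objective P L \<gamma> \<phi> \<sigma> = qint P (\<lambda>z. ereal (u z)) + ereal \<gamma> * qint P (\<lambda>z. ereal (v z))"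
      unfolding objective_def pd u_def ..
    show ?thesis
    proof (cases "(\<integral>\<^sup>+ z. ennreal (u z) \<partial>P) = \<infinity>")
      case True
      then have "qint P (\<lambda>z. ereal (u z)) = \<infinity>" by (intro qint_top) simp
      then show ?thesis unfolding obj by simp
    next
      case uf: False
      show ?thesis
      proof (cases "(\<integral>\<^sup>+ z. ennreal (v z) \<partial>P) = \<infinity>")
        case True
        then have "qint P (\<lambda>z. ereal (v z)) = \<infinity>" by (intro qint_top) simp
        then show ?thesis unfolding obj using g0 by simp
      next
        case vf: False
        define K where "K = \<bar>phr \<phi> 0\<bar> + \<bar>phr \<phi> 2\<bar>"
        have vint: "integrable P v"
        proof (rule integrable_from_below[OF vM])
          show "(\<integral>\<^sup>+ z. ennreal (v z) \<partial>P) < \<infinity>" using vf by (simp add: top.not_eq_extremum)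
          show "integrable P (\<lambda>z. K * (\<sigma> z + 1))" using \<sigma>int by simp
          show "AE z in P. - (K * (\<sigma> z + 1)) \<le> v z"
            using \<sigma>0 phi_lower[OF assms(4)] unfolding v_def K_def by (intro AE_I2) auto
        qed
        have "AE z in P. 0 \<le> \<sigma> z" using \<sigma>0 by (intro AE_I2) auto
        with AEle have AEs: "AE z in P. \<sigma> z * (b - L z) - \<gamma> * v z \<le> G z \<and> 0 \<le> \<sigma> z"
        proof eventually_elim
          case (elim z)
          then show ?case unfolding v_def by blast
        qed
        have uint: "integrable P u"
        proof (rule integrable_from_below[OF uM])
          show "(\<integral>\<^sup>+ z. ennreal (u z) \<partial>P) < \<infinity>" using uf by (simp add: top.not_eq_extremum)
          show "integrable P (\<lambda>z. \<bar>b\<bar> * \<sigma> z + \<gamma> * \<bar>v z\<bar> + \<bar>G z\<bar>)"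
            using \<sigma>int vint Gint by (intro Bochner_Integration.integrable_add) auto
          from AEs show "AE z in P. - (\<bar>b\<bar> * \<sigma> z + \<gamma> * \<bar>v z\<bar> + \<bar>G z\<bar>) \<le> u z"
          proof (eventually_elim)
            case (elim z)
            have "\<sigma> z * (\<bar>b\<bar> + b) \<ge> 0" using elim by (intro mult_nonneg_nonneg) auto
            then have "- (\<bar>b\<bar> * \<sigma> z) \<le> \<sigma> z * b" by (simp add: algebra_simps)
            moreover have "\<gamma> * v z \<le> \<gamma> * \<bar>v z\<bar>" using g0 by (intro mult_left_mono) auto
            moreover have "\<sigma> z * (b - L z) = \<sigma> z * b - u z" by (simp add: u_def algebra_simps)
            ultimately show ?case using elim by linarith
          qed
        qed
        have "objective P L \<gamma> \<phi> \<sigma> = ereal (integral\<^sup>L P u + \<gamma> * integral\<^sup>L P v)"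
          unfolding obj qint_real[OF uint] qint_real[OF vint] by simp
        also have "integral\<^sup>L P u + \<gamma> * integral\<^sup>L P v = integral\<^sup>L P (\<lambda>z. u z + \<gamma> * v z)"
          using uint vint by simp
        finally have o: "objective P L \<gamma> \<phi> \<sigma> = ereal (integral\<^sup>L P (\<lambda>z. u z + \<gamma> * v z))" .
        have "integral\<^sup>L P (\<lambda>z. \<sigma> z * b - G z) \<le> integral\<^sup>L P (\<lambda>z. u z + \<gamma> * v z)"
        proof (rule integral_mono_AE)
          show "integrable P (\<lambda>z. \<sigma> z * b - G z)" using \<sigma>int Gint by auto
          show "integrable P (\<lambda>z. u z + \<gamma> * v z)" using uint vint by auto
          from AEs show "AE z in P. \<sigma> z * b - G z \<le> u z + \<gamma> * v z"
          proof eventually_elim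
            case (elim z)
            have "\<sigma> z * (b - L z) = \<sigma> z * b - u z" by (simp add: u_def algebra_simps)
            then show ?case using elim by linarith
          qed
        qed
        moreover have "integral\<^sup>L P (\<lambda>z. \<sigma> z * b - G z) = b - integral\<^sup>L P G"
          using \<sigma>int Gint by simp
        ultimately show ?thesis unfolding o by simp
      qed
    qed
  qed
  show ?thesis
    unfolding optimal_ratio_def
  proof
    show "feasible_ratio P (\<lambda>z. max 0 (right_deriv (cconj \<phi>) ((b - L z) / \<gamma>)))"
      using feas unfolding \<rho>_def r_def .
    show "\<forall>\<rho>'. feasible_ratio P \<rho>' \<longrightarrow>
        objective P L \<gamma> \<phi> (\<lambda>z. max 0 (right_deriv (cconj \<phi>) ((b - L z) / \<gamma>))) \<le> objective P L \<gamma> \<phi> \<rho>'"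
      using obj\<rho> main unfolding \<rho>_def r_def by simp
  qed
qed

end
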